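(* Let $\rho$ be a symmetric Lévy measure on $\mathbb{R}^d\setminus\{0\}$ with full support and let $\Theta(u)=\int(1-\cos\langle u,r\rangle)\,\rho(dr)$, $u\in\mathbb{R}^d$. For all $d$-dimensional random vectors $U,V$ the following hold (with values in $[0,\infty]$): (a) If $(U',V')$ is an independent copy of $(U,V)$, then $\mathbb{E}\Theta(U-U')+\mathbb{E}\Theta(V-V')\le 2\mathbb{E}\Theta(U-V')$. (b) $\mathbb{E}\Theta(U-V)\le 2(\mathbb{E}\Theta(U)+\mathbb{E}\Theta(V))$, and if $U'$ is an independent copy of $U$, then $\mathbb{E}\Theta(U-U')\le 4\mathbb{E}\Theta(U)$. (c) $d_\rho^2(\mathcal L(U),\mathcal L(V))\le 4(\mathbb{E}\Theta(U)+\mathbb{E}\Theta(V))$. (d) If $(U',V')$ is an independent copy of $(U,V)$ and $\mathbb{E}\Theta(U)+\mathbb{E}\Theta(V)<\infty$, then all terms in the following identity are finite and $$d_\rho^2(\mathcal L(U),\mathcal L(V))=2\mathbb{E}\Theta(U-V')-\mathbb{E}\Theta(U-U')-\mathbb{E}\Theta(V-V').$$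
   Context: A symmetric Lévy measure on $\mathbb{R}^d\setminus\{0\}$ is a measure with $\rho(B)=\rho(-B)$ and $\int(1\wedge|r|^2)\rho(dr)<\infty$; full support means $\rho(G)>0$ for all nonempty open $G\subset\mathbb{R}^d\setminus\{0\}$. For $d$-dimensional random vectors $U,V$ with characteristic functions $f_U,f_V$, $d_\rho(\mathcal L(U),\mathcal L(V)):=\big(\int|f_U(r)-f_V(r)|^2\,\rho(dr)\big)^{1/2}\in[0,\infty]$. *)

theory Defs
  imports "HOL-Probability.Probability"
begin

text \<open>Symmetric Levy measure on R^d minus the origin, represented as a Borel measure
  on the euclidean space giving no mass to the origin.\<close>
definition sym_levy_measure :: "'a::euclidean_space measure \<Rightarrow> bool" where
  "sym_levy_measure \<rho> \<longleftrightarrow>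
     sets \<rho> = sets borel \<and>
     emeasure \<rho> {0} = 0 \<and>
     (\<forall>B \<in> sets borel. emeasure \<rho> (uminus ` B) = emeasure \<rho> B) \<and>
     (\<integral>\<^sup>+ r. ennreal (min 1 (norm r ^ 2)) \<partial>\<rho>) < \<infinity>"

definition full_support :: "'a::euclidean_space measure \<Rightarrow> bool" where
  "full_support \<rho> \<longleftrightarrow> (\<forall>G. open G \<and> G \<noteq> {} \<and> 0 \<notin> G \<longrightarrow> emeasure \<rho> G > 0)"

definition Theta :: "'a::euclidean_space measure \<Rightarrow> 'a \<Rightarrow> ennreal" where
  "Theta \<rho> u = (\<integral>\<^sup>+ r. ennreal (1 - cos (u \<bullet> r)) \<partial>\<rho>)"

definition charf :: "'a::euclidean_space measure \<Rightarrow> 'a \<Rightarrow> complex" where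
  "charf \<mu> r = (\<integral> x. cis (r \<bullet> x) \<partial>\<mu>)"

definition d_rho :: "'a::euclidean_space measure \<Rightarrow> 'a measure \<Rightarrow> 'a measure \<Rightarrow> ennreal" where
  "d_rho \<rho> \<mu> \<nu> =
     (let I = (\<integral>\<^sup>+ r. ennreal ((cmod (charf \<mu> r - charf \<nu> r))\<^sup>2) \<partial>\<rho>)
      in if I = \<infinity> then \<infinity> else ennreal (sqrt (enn2real I)))"

abbreviation law :: "'b measure \<Rightarrow> ('b \<Rightarrow> 'a::euclidean_space) \<Rightarrow> 'a measure" where
  "law M X \<equiv> distr M borel X"

end

theory Submission
  imports Defs
begin
lemma levy_sigma_finite:
  fixes \<rho> :: "'a::euclidean_space measure"
  assumes "sym_levy_measure \<rho>"
  shows "sigma_finite_measure \<rho>"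
proof
  have sets: "sets \<rho> = sets borel" and fin: "(\<integral>\<^sup>+ r. ennreal (min 1 (norm r ^ 2)) \<partial>\<rho>) < \<infinity>"
    using assms unfolding sym_levy_measure_def by auto
  have sp: "space \<rho> = UNIV" using sets_eq_imp_space_eq[OF sets] by simp
  define S where "S n = {r::'a. 1 / real (Suc n) \<le> norm r}" for n
  have Sfin: "emeasure \<rho> (S n) \<noteq> \<infinity>" for n
  proof
    assume inf: "emeasure \<rho> (S n) = \<infinity>"
    have Sm: "S n \<in> sets \<rho>" unfolding sets S_def by measurable
    let ?e = "1 / real (Suc n)"
    have "ennreal (?e^2) * emeasure \<rho> (S n) = (\<integral>\<^sup>+ r. ennreal (?e^2) * indicator (S n) r \<partial>\<rho>)"
      using Sm by (simp add: nn_integral_cmult_indicator)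
    also have "\<dots> \<le> (\<integral>\<^sup>+ r. ennreal (min 1 (norm r ^ 2)) \<partial>\<rho>)"
    proof (rule nn_integral_mono)
      fix r assume "r \<in> space \<rho>"
      show "ennreal (?e^2) * indicator (S n) r \<le> ennreal (min 1 (norm r ^ 2))"
      proof (cases "r \<in> S n")
        case True
        then have h: "?e \<le> norm r" by (simp add: S_def)
        have "?e \<le> 1" by simp
        have "?e^2 \<le> norm r ^ 2" using h by (intro power_mono) auto
        moreover have "?e^2 \<le> 1" using \<open>?e \<le> 1\<close> by (simp add: power_le_one)
        ultimately show ?thesis using True by (simp add: ennreal_leI)
      qed simp
    qed
    finally have "ennreal (?e^2) * emeasure \<rho> (S n) < \<infinity>" using fin by simp
    then show False using inf by (simp add: ennreal_mult_less_top)
  qed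
  let ?A = "insert {0} (range S)"
  show "\<exists>A. countable A \<and> A \<subseteq> sets \<rho> \<and> \<Union> A = space \<rho> \<and> (\<forall>a\<in>A. emeasure \<rho> a \<noteq> \<infinity>)"
  proof (intro exI conjI)
    show "countable ?A" by simp
    show "?A \<subseteq> sets \<rho>" unfolding sets S_def by auto
    show "\<Union> ?A = space \<rho>"
    proof -
      have "r \<in> \<Union> ?A" for r :: 'a
      proof (cases "r = 0")
        case False
        then have "norm r > 0" by simp
        then obtain n where "1 / real (Suc n) < norm r" using nat_approx_posE by blast
        then show ?thesis unfolding S_def by (auto intro!: exI[of _ n])
      qed simp
      then show ?thesis using sp by auto
    qed
    show "\<forall>a\<in>?A. emeasure \<rho> a \<noteq> \<infinity>"
      using Sfin assms unfolding sym_levy_measure_def by auto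
  qed
qed


definition phi :: "'b measure \<Rightarrow> ('b \<Rightarrow> 'a::euclidean_space) \<Rightarrow> 'a \<Rightarrow> complex" where
  "phi M X r = (\<integral>\<omega>. cis (r \<bullet> X \<omega>) \<partial>M)"

lemma cis_borel[measurable]: "cis \<in> borel_measurable borel"
  by (intro borel_measurable_continuous_onI continuous_intros)

lemma meas_cis[measurable]:
  fixes X :: "'b \<Rightarrow> 'a::euclidean_space"
  assumes [measurable]: "X \<in> borel_measurable M"
  shows "(\<lambda>\<omega>. cis (r \<bullet> X \<omega>)) \<in> borel_measurable M"
  by measurable

lemma int_cis:
  fixes X :: "'b \<Rightarrow> 'a::euclidean_space"
  assumes "prob_space M" "X \<in> borel_measurable M"
  shows "integrable M (\<lambda>\<omega>. cis (r \<bullet> X \<omega>))"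
proof -
  interpret prob_space M by fact
  show ?thesis by (rule integrable_const_bound[where B=1]) (use assms in auto)
qed

lemma norm_phi:
  fixes X :: "'b \<Rightarrow> 'a::euclidean_space"
  assumes "prob_space M" "X \<in> borel_measurable M"
  shows "cmod (phi M X r) \<le> 1"
proof -
  interpret prob_space M by fact
  have "cmod (phi M X r) \<le> (\<integral>\<omega>. cmod (cis (r \<bullet> X \<omega>)) \<partial>M)"
    unfolding phi_def by (rule integral_norm_bound)
  also have "\<dots> = 1" by (simp add: prob_space)
  finally show ?thesis .
qed

lemma K1:
  fixes X :: "'b \<Rightarrow> 'a::euclidean_space"
  assumes "prob_space M" and [measurable]: "X \<in> borel_measurable M"
  shows "(\<integral>\<^sup>+\<omega>. ennreal (1 - cos (X \<omega> \<bullet> r)) \<partial>M) = ennreal (1 - Re (phi M X r))"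
proof -
  interpret prob_space M by fact
  have ic: "integrable M (\<lambda>\<omega>. cos (r \<bullet> X \<omega>))"
    by (rule integrable_const_bound[where B=1]) auto
  have "(\<integral>\<^sup>+\<omega>. ennreal (1 - cos (X \<omega> \<bullet> r)) \<partial>M) = ennreal (\<integral>\<omega>. 1 - cos (r \<bullet> X \<omega>) \<partial>M)"
    by (subst nn_integral_eq_integral[symmetric]) (use ic in \<open>auto simp: inner_commute\<close>)
  also have "(\<integral>\<omega>. 1 - cos (r \<bullet> X \<omega>) \<partial>M) = 1 - (\<integral>\<omega>. cos (r \<bullet> X \<omega>) \<partial>M)"
    using ic by (simp add: prob_space)
  also have "(\<integral>\<omega>. cos (r \<bullet> X \<omega>) \<partial>M) = Re (phi M X r)"
    unfolding phi_def by (subst integral_Re[symmetric]) (auto intro: int_cis prob_space_axioms)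
  finally show ?thesis .
qed

lemma charf_law:
  fixes X :: "'b \<Rightarrow> 'a::euclidean_space"
  assumes [measurable]: "X \<in> borel_measurable M"
  shows "charf (law M X) r = phi M X r"
  unfolding charf_def phi_def by (subst integral_distr) auto

lemma phi_law:
  fixes X Y :: "'b \<Rightarrow> 'a::euclidean_space"
  assumes "X \<in> borel_measurable M" "Y \<in> borel_measurable M" "distr M borel X = distr M borel Y"
  shows "phi M X r = phi M Y r"
  using charf_law[OF assms(1)] charf_law[OF assms(2)] assms(3) by metis

lemma K2:
  fixes X Y :: "'b \<Rightarrow> 'a::euclidean_space"
  assumes "prob_space M" and ind: "prob_space.indep_var M borel X borel Y"
  shows "phi M (\<lambda>\<omega>. X \<omega> - Y \<omega>) r = phi M X r * cnj (phi M Y r)"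
proof -
  interpret prob_space M by fact
  have [measurable]: "X \<in> borel_measurable M" "Y \<in> borel_measurable M"
    using indep_var_rv1[OF ind] indep_var_rv2[OF ind] by auto
  have "phi M (\<lambda>\<omega>. X \<omega> - Y \<omega>) r = (\<integral>\<omega>. cis (r \<bullet> X \<omega>) * cis (- (r \<bullet> Y \<omega>)) \<partial>M)"
    unfolding phi_def by (simp add: inner_diff_right cis_mult)
  also have "\<dots> = (\<integral>\<omega>. cis (r \<bullet> X \<omega>) \<partial>M) * (\<integral>\<omega>. cis (- (r \<bullet> Y \<omega>)) \<partial>M)"
  proof (rule indep_var_lebesgue_integral)
    show "indep_var borel (\<lambda>\<omega>. cis (r \<bullet> X \<omega>)) borel (\<lambda>\<omega>. cis (- (r \<bullet> Y \<omega>)))"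
      using indep_var_compose[unfolded comp_def, OF ind, of "\<lambda>x. cis (r \<bullet> x)" borel "\<lambda>x. cis (- (r \<bullet> x))" borel]
      by (simp add: measurable_compose[OF _ cis_borel])
    show "integrable M (\<lambda>\<omega>. cis (r \<bullet> X \<omega>))" by (rule int_cis) (auto intro: prob_space_axioms)
    show "integrable M (\<lambda>\<omega>. cis (- (r \<bullet> Y \<omega>)))"
      by (rule integrable_const_bound[where B=1]) auto
  qed
  also have "(\<integral>\<omega>. cis (- (r \<bullet> Y \<omega>)) \<partial>M) = cnj (phi M Y r)"
    unfolding phi_def by (simp add: cis_cnj[symmetric])
  finally show ?thesis unfolding phi_def by simp
qed

lemma levy_sets: "sym_levy_measure \<rho> \<Longrightarrow> sets \<rho> = sets borel"
  unfolding sym_levy_measure_def by auto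

lemma phi_meas:
  fixes X :: "'b \<Rightarrow> 'a::euclidean_space"
  assumes "prob_space M" "sym_levy_measure \<rho>" and [measurable]: "X \<in> borel_measurable M"
  shows "(\<lambda>r. phi M X r) \<in> borel_measurable \<rho>"
proof -
  interpret M: prob_space M by fact
  have sets: "sets \<rho> = sets borel" using levy_sets assms(2) by auto
  have "(\<lambda>(r, \<omega>). cis (r \<bullet> X \<omega>)) \<in> borel_measurable (\<rho> \<Otimes>\<^sub>M M)"
    by (subst measurable_cong_sets[OF sets_pair_measure_cong[OF sets refl] refl]) measurable
  then show ?thesis unfolding phi_def
    using M.borel_measurable_lebesgue_integral[of "\<lambda>r \<omega>. cis (r \<bullet> X \<omega>)" \<rho>] by simp
qed

lemma Theta_meas:
  fixes X :: "'b \<Rightarrow> 'a::euclidean_space"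
  assumes "sym_levy_measure \<rho>" and [measurable]: "X \<in> borel_measurable M"
  shows "(\<lambda>\<omega>. Theta \<rho> (X \<omega>)) \<in> borel_measurable M"
proof -
  interpret R: sigma_finite_measure \<rho> by (rule levy_sigma_finite) fact
  have sets: "sets \<rho> = sets borel" using levy_sets assms(1) by auto
  have "(\<lambda>(\<omega>, r). ennreal (1 - cos (X \<omega> \<bullet> r))) \<in> borel_measurable (M \<Otimes>\<^sub>M \<rho>)"
    by (subst measurable_cong_sets[OF sets_pair_measure_cong[OF refl sets] refl]) measurable
  then show ?thesis unfolding Theta_def
    using R.borel_measurable_nn_integral[of "\<lambda>\<omega> r. ennreal (1 - cos (X \<omega> \<bullet> r))" M] by simp
qed

lemma Tonelli_Theta:
  fixes X :: "'b \<Rightarrow> 'a::euclidean_space"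
  assumes "prob_space M" "sym_levy_measure \<rho>" and [measurable]: "X \<in> borel_measurable M"
  shows "(\<integral>\<^sup>+\<omega>. Theta \<rho> (X \<omega>) \<partial>M) = (\<integral>\<^sup>+r. ennreal (1 - Re (phi M X r)) \<partial>\<rho>)"
proof -
  interpret M: prob_space M by fact
  interpret R: sigma_finite_measure \<rho> by (rule levy_sigma_finite) fact
  interpret P: pair_sigma_finite M \<rho> unfolding pair_sigma_finite_def
    using M.sigma_finite_measure_axioms R.sigma_finite_measure_axioms by auto
  have sets: "sets \<rho> = sets borel" using levy_sets assms(2) by auto
  have f: "(\<lambda>(\<omega>, r). ennreal (1 - cos (X \<omega> \<bullet> r))) \<in> borel_measurable (M \<Otimes>\<^sub>M \<rho>)"
    by (subst measurable_cong_sets[OF sets_pair_measure_cong[OF refl sets] refl]) measurable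
  have "(\<integral>\<^sup>+r. ennreal (1 - Re (phi M X r)) \<partial>\<rho>) = (\<integral>\<^sup>+r. (\<integral>\<^sup>+\<omega>. ennreal (1 - cos (X \<omega> \<bullet> r)) \<partial>M) \<partial>\<rho>)"
    using K1[OF assms(1,3)] by simp
  also have "\<dots> = (\<integral>\<^sup>+\<omega>. (\<integral>\<^sup>+r. ennreal (1 - cos (X \<omega> \<bullet> r)) \<partial>\<rho>) \<partial>M)"
    using P.Fubini'[of "\<lambda>\<omega> r. ennreal (1 - cos (X \<omega> \<bullet> r))"] f by simp
  finally show ?thesis unfolding Theta_def by simp
qed

lemma P_eq:
  fixes a b :: complex
  shows "(cmod (a - b))\<^sup>2 + (1 - Re (a * cnj a)) + (1 - Re (b * cnj b)) = 2 * (1 - Re (a * cnj b))"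
proof -
  have "(cmod (a - b))\<^sup>2 = (Re a - Re b)^2 + (Im a - Im b)^2" by (simp add: cmod_power2)
  then show ?thesis by (simp add: power2_eq_square algebra_simps)
qed

lemma P_a:
  fixes a b :: complex
  shows "(1 - Re (a * cnj a)) + (1 - Re (b * cnj b)) \<le> 2 * (1 - Re (a * cnj b))"
  using P_eq[of a b] by (smt (verit) zero_le_power2)

lemma P_c:
  fixes a b :: complex
  assumes "cmod a \<le> 1" "cmod b \<le> 1"
  shows "(cmod (a - b))\<^sup>2 \<le> 4 * ((1 - Re a) + (1 - Re b))"
proof -
  have ha: "Re a ^ 2 + Im a ^ 2 \<le> 1" using assms(1)
    by (metis cmod_power2 abs_norm_cancel norm_ge_zero power_le_one)
  have hb: "Re b ^ 2 + Im b ^ 2 \<le> 1" using assms(2)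
    by (metis cmod_power2 abs_norm_cancel norm_ge_zero power_le_one)
  have id: "(Re a - Re b)^2 + (Im a - Im b)^2 + ((Re a - 1) + (Re b - 1))^2 + (Im a + Im b)^2
     = 2 * ((Re a - 1)^2 + Im a ^2) + 2 * ((Re b - 1)^2 + Im b ^2)"
    by (simp add: power2_eq_square algebra_simps)
  have "(cmod (a - b))\<^sup>2 = (Re a - Re b)^2 + (Im a - Im b)^2" by (simp add: cmod_power2)
  moreover have "0 \<le> ((Re a - 1) + (Re b - 1))^2 + (Im a + Im b)^2" by simp
  ultimately have "(cmod (a - b))\<^sup>2 \<le> 2 * ((Re a - 1)^2 + Im a ^2) + 2 * ((Re b - 1)^2 + Im b ^2)"
    using id by linarith
  also have "\<dots> = 2 * (Re a ^ 2 + Im a ^ 2) + 2 * (Re b ^ 2 + Im b ^ 2) + 4 - 4 * Re a - 4 * Re b"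
    by (simp add: power2_eq_square algebra_simps)
  finally have "(cmod (a - b))\<^sup>2 \<le> 2 * (Re a ^ 2 + Im a ^ 2) + 2 * (Re b ^ 2 + Im b ^ 2) + 4 - 4 * Re a - 4 * Re b" .
  then show ?thesis using ha hb by (simp add: algebra_simps)
qed

lemma P_b:
  fixes x y :: real
  shows "1 - cos (x - y) \<le> 2 * ((1 - cos x) + (1 - cos y))"
proof -
  have "(cmod (cis x - cis y))\<^sup>2 \<le> 4 * ((1 - Re (cis x)) + (1 - Re (cis y)))"
    by (rule P_c) auto
  moreover have "(cmod (cis x - cis y))\<^sup>2 = 2 - 2 * cos (x - y)"
  proof -
    have "(cmod (cis x - cis y))\<^sup>2 = (cos x - cos y)^2 + (sin x - sin y)^2" by (simp add: cmod_power2)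
    also have "\<dots> = (sin x ^2 + cos x ^2) + (sin y ^2 + cos y^2) - 2 * (cos x * cos y + sin x * sin y)"
      by (simp add: power2_eq_square algebra_simps)
    also have "\<dots> = 2 - 2 * cos (x - y)" by (simp add: cos_diff)
    finally show ?thesis .
  qed
  ultimately show ?thesis by simp
qed

lemma Re_mod: "cmod a \<le> 1 \<Longrightarrow> 0 \<le> 1 - Re (a::complex)"
  using complex_Re_le_cmod[of a] by linarith

lemma d_rho_sq: "(d_rho \<rho> \<mu> \<nu>)\<^sup>2 = (\<integral>\<^sup>+ r. ennreal ((cmod (charf \<mu> r - charf \<nu> r))\<^sup>2) \<partial>\<rho>)"
proof (cases "(\<integral>\<^sup>+ r. ennreal ((cmod (charf \<mu> r - charf \<nu> r))\<^sup>2) \<partial>\<rho>) = \<infinity>")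
  case True
  then show ?thesis unfolding d_rho_def Let_def by (simp add: power2_eq_square)
next
  case False
  let ?I = "(\<integral>\<^sup>+ r. ennreal ((cmod (charf \<mu> r - charf \<nu> r))\<^sup>2) \<partial>\<rho>)"
  have "(ennreal (sqrt (enn2real ?I)))\<^sup>2 = ennreal ((sqrt (enn2real ?I))\<^sup>2)"
    by (simp add: ennreal_power)
  also have "\<dots> = ennreal (enn2real ?I)" by simp
  also have "\<dots> = ?I" using False by (simp add: less_top)
  finally show ?thesis using False unfolding d_rho_def Let_def by simp
qed

lemma Theta_le:
  fixes u v :: "'a::euclidean_space"
  assumes "sym_levy_measure \<rho>"
  shows "Theta \<rho> (u - v) \<le> 2 * (Theta \<rho> u + Theta \<rho> v)"
proof -
  have sets: "sets \<rho> = sets borel" using levy_sets assms by auto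
  have m: "(\<lambda>r. ennreal (1 - cos (w \<bullet> r))) \<in> borel_measurable \<rho>" for w :: 'a
    by (subst measurable_cong_sets[OF sets refl]) measurable
  have "Theta \<rho> (u - v) \<le> (\<integral>\<^sup>+ r. 2 * (ennreal (1 - cos (u \<bullet> r)) + ennreal (1 - cos (v \<bullet> r))) \<partial>\<rho>)"
    unfolding Theta_def
  proof (rule nn_integral_mono)
    fix r
    have "ennreal (1 - cos ((u - v) \<bullet> r)) \<le> ennreal (2 * ((1 - cos (u \<bullet> r)) + (1 - cos (v \<bullet> r))))"
      using P_b[of "u \<bullet> r" "v \<bullet> r"] by (intro ennreal_leI) (simp add: inner_diff_left)
    also have "\<dots> = 2 * (ennreal (1 - cos (u \<bullet> r)) + ennreal (1 - cos (v \<bullet> r)))"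
      by (subst ennreal_mult') (auto simp del: ennreal_plus simp add: ennreal_plus[symmetric])
    finally show "ennreal (1 - cos ((u - v) \<bullet> r)) \<le> 2 * (ennreal (1 - cos (u \<bullet> r)) + ennreal (1 - cos (v \<bullet> r)))" .
  qed
  also have "\<dots> = 2 * (Theta \<rho> u + Theta \<rho> v)"
    unfolding Theta_def using m by (simp add: nn_integral_cmult nn_integral_add)
  finally show ?thesis .
qed

lemma Theta_diff_int:
  fixes X Y :: "'b \<Rightarrow> 'a::euclidean_space"
  assumes "sym_levy_measure \<rho>" "X \<in> borel_measurable M" "Y \<in> borel_measurable M"
  shows "(\<integral>\<^sup>+\<omega>. Theta \<rho> (X \<omega> - Y \<omega>) \<partial>M) \<le> 2 * ((\<integral>\<^sup>+\<omega>. Theta \<rho> (X \<omega>) \<partial>M) + (\<integral>\<^sup>+\<omega>. Theta \<rho> (Y \<omega>) \<partial>M))"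
proof -
  have "(\<integral>\<^sup>+\<omega>. Theta \<rho> (X \<omega> - Y \<omega>) \<partial>M) \<le> (\<integral>\<^sup>+\<omega>. 2 * (Theta \<rho> (X \<omega>) + Theta \<rho> (Y \<omega>)) \<partial>M)"
    by (rule nn_integral_mono) (rule Theta_le[OF assms(1)])
  also have "\<dots> = 2 * ((\<integral>\<^sup>+\<omega>. Theta \<rho> (X \<omega>) \<partial>M) + (\<integral>\<^sup>+\<omega>. Theta \<rho> (Y \<omega>) \<partial>M))"
    using Theta_meas[OF assms(1,2)] Theta_meas[OF assms(1,3)]
    by (simp add: nn_integral_cmult nn_integral_add)
  finally show ?thesis .
qed

lemma pair_facts:
  fixes U V U' V' :: "'b \<Rightarrow> 'a::euclidean_space"
  assumes "prob_space M" and [measurable]: "U \<in> borel_measurable M" "V \<in> borel_measurable M"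
    "U' \<in> borel_measurable M" "V' \<in> borel_measurable M"
    and D: "distr M (borel \<Otimes>\<^sub>M borel) (\<lambda>\<omega>. (U' \<omega>, V' \<omega>)) = distr M (borel \<Otimes>\<^sub>M borel) (\<lambda>\<omega>. (U \<omega>, V \<omega>))"
    and I: "prob_space.indep_var M (borel \<Otimes>\<^sub>M borel) (\<lambda>\<omega>. (U \<omega>, V \<omega>)) (borel \<Otimes>\<^sub>M borel) (\<lambda>\<omega>. (U' \<omega>, V' \<omega>))"
  shows "distr M borel U' = distr M borel U" "distr M borel V' = distr M borel V"
    "prob_space.indep_var M borel U borel U'" "prob_space.indep_var M borel V borel V'"
    "prob_space.indep_var M borel U borel V'"
proof -
  interpret prob_space M by fact
  have e1: "distr M borel U' = distr (distr M (borel \<Otimes>\<^sub>M borel) (\<lambda>\<omega>. (U' \<omega>, V' \<omega>))) borel fst"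
    by (subst distr_distr) (auto simp: comp_def)
  have e2: "distr M borel U = distr (distr M (borel \<Otimes>\<^sub>M borel) (\<lambda>\<omega>. (U \<omega>, V \<omega>))) borel fst"
    by (subst distr_distr) (auto simp: comp_def)
  show "distr M borel U' = distr M borel U" using e1 e2 D by simp
  have e3: "distr M borel V' = distr (distr M (borel \<Otimes>\<^sub>M borel) (\<lambda>\<omega>. (U' \<omega>, V' \<omega>))) borel snd"
    by (subst distr_distr) (auto simp: comp_def)
  have e4: "distr M borel V = distr (distr M (borel \<Otimes>\<^sub>M borel) (\<lambda>\<omega>. (U \<omega>, V \<omega>))) borel snd"
    by (subst distr_distr) (auto simp: comp_def)
  show "distr M borel V' = distr M borel V" using e3 e4 D by simp
  show "indep_var borel U borel U'"
    using indep_var_compose[unfolded comp_def, OF I, of fst borel fst borel] by simp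
  show "indep_var borel V borel V'"
    using indep_var_compose[unfolded comp_def, OF I, of snd borel snd borel] by simp
  show "indep_var borel U borel V'"
    using indep_var_compose[unfolded comp_def, OF I, of fst borel snd borel] by simp
qed

lemma ident:
  fixes U V U' V' :: "'b \<Rightarrow> 'a::euclidean_space"
  assumes P: "prob_space M" and L: "sym_levy_measure \<rho>"
    and [measurable]: "U \<in> borel_measurable M" "V \<in> borel_measurable M"
    "U' \<in> borel_measurable M" "V' \<in> borel_measurable M"
    and D: "distr M (borel \<Otimes>\<^sub>M borel) (\<lambda>\<omega>. (U' \<omega>, V' \<omega>)) = distr M (borel \<Otimes>\<^sub>M borel) (\<lambda>\<omega>. (U \<omega>, V \<omega>))"
    and I: "prob_space.indep_var M (borel \<Otimes>\<^sub>M borel) (\<lambda>\<omega>. (U \<omega>, V \<omega>)) (borel \<Otimes>\<^sub>M borel) (\<lambda>\<omega>. (U' \<omega>, V' \<omega>))"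
  shows "(d_rho \<rho> (law M U) (law M V))\<^sup>2 + (\<integral>\<^sup>+\<omega>. Theta \<rho> (U \<omega> - U' \<omega>) \<partial>M) + (\<integral>\<^sup>+\<omega>. Theta \<rho> (V \<omega> - V' \<omega>) \<partial>M)
     = 2 * (\<integral>\<^sup>+\<omega>. Theta \<rho> (U \<omega> - V' \<omega>) \<partial>M)"
proof -
  note pf = pair_facts[OF P assms(3-6) D I]
  have [measurable]: "(\<lambda>r. phi M U r) \<in> borel_measurable \<rho>" "(\<lambda>r. phi M V r) \<in> borel_measurable \<rho>"
    using phi_meas[OF P L] by auto
  have pUU: "phi M (\<lambda>\<omega>. U \<omega> - U' \<omega>) r = phi M U r * cnj (phi M U r)" for r
    using K2[OF P pf(3)] phi_law[OF _ _ pf(1)] by simp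
  have pVV: "phi M (\<lambda>\<omega>. V \<omega> - V' \<omega>) r = phi M V r * cnj (phi M V r)" for r
    using K2[OF P pf(4)] phi_law[OF _ _ pf(2)] by simp
  have pUV: "phi M (\<lambda>\<omega>. U \<omega> - V' \<omega>) r = phi M U r * cnj (phi M V r)" for r
    using K2[OF P pf(5)] phi_law[OF _ _ pf(2)] by simp
  have nn: "0 \<le> 1 - Re (phi M X r * cnj (phi M Y r))" if "X \<in> borel_measurable M" "Y \<in> borel_measurable M" for X Y :: "'b \<Rightarrow> 'a" and r
    by (rule Re_mod) (use norm_phi[OF P that(1)] norm_phi[OF P that(2)] in \<open>auto simp: norm_mult intro: mult_le_one\<close>)
  have "(d_rho \<rho> (law M U) (law M V))\<^sup>2 + (\<integral>\<^sup>+\<omega>. Theta \<rho> (U \<omega> - U' \<omega>) \<partial>M) + (\<integral>\<^sup>+\<omega>. Theta \<rho> (V \<omega> - V' \<omega>) \<partial>M)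
    = (\<integral>\<^sup>+ r. ennreal ((cmod (phi M U r - phi M V r))\<^sup>2) \<partial>\<rho>)
      + (\<integral>\<^sup>+ r. ennreal (1 - Re (phi M U r * cnj (phi M U r))) \<partial>\<rho>)
      + (\<integral>\<^sup>+ r. ennreal (1 - Re (phi M V r * cnj (phi M V r))) \<partial>\<rho>)"
    by (simp add: d_rho_sq charf_law Tonelli_Theta[OF P L] pUU pVV)
  also have "\<dots> = (\<integral>\<^sup>+ r. ennreal ((cmod (phi M U r - phi M V r))\<^sup>2)
      + ennreal (1 - Re (phi M U r * cnj (phi M U r))) + ennreal (1 - Re (phi M V r * cnj (phi M V r))) \<partial>\<rho>)"
    by (simp add: nn_integral_add)
  also have "\<dots> = (\<integral>\<^sup>+ r. 2 * ennreal (1 - Re (phi M U r * cnj (phi M V r))) \<partial>\<rho>)"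
  proof (rule nn_integral_cong)
    fix r
    have "ennreal ((cmod (phi M U r - phi M V r))\<^sup>2)
      + ennreal (1 - Re (phi M U r * cnj (phi M U r))) + ennreal (1 - Re (phi M V r * cnj (phi M V r)))
      = ennreal ((cmod (phi M U r - phi M V r))\<^sup>2
      + (1 - Re (phi M U r * cnj (phi M U r))) + (1 - Re (phi M V r * cnj (phi M V r))))"
      using nn[of U U r] nn[of V V r] by (simp del: ennreal_plus add: ennreal_plus[symmetric])
    also have "\<dots> = ennreal (2 * (1 - Re (phi M U r * cnj (phi M V r))))" by (simp only: P_eq)
    also have "\<dots> = 2 * ennreal (1 - Re (phi M U r * cnj (phi M V r)))"
      by (subst ennreal_mult') (simp_all only: ennreal_numeral order_refl zero_le_numeral)
    finally show "ennreal ((cmod (phi M U r - phi M V r))\<^sup>2)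
      + ennreal (1 - Re (phi M U r * cnj (phi M U r))) + ennreal (1 - Re (phi M V r * cnj (phi M V r)))
      = 2 * ennreal (1 - Re (phi M U r * cnj (phi M V r)))" .
  qed
  also have "\<dots> = 2 * (\<integral>\<^sup>+\<omega>. Theta \<rho> (U \<omega> - V' \<omega>) \<partial>M)"
    by (simp add: nn_integral_cmult Tonelli_Theta[OF P L] pUV)
  finally show ?thesis .
qed

lemma part_c:
  fixes U V :: "'b \<Rightarrow> 'a::euclidean_space"
  assumes P: "prob_space M" and L: "sym_levy_measure \<rho>"
    and [measurable]: "U \<in> borel_measurable M" "V \<in> borel_measurable M"
  shows "(d_rho \<rho> (law M U) (law M V))\<^sup>2 \<le> 4 * ((\<integral>\<^sup>+ \<omega>. Theta \<rho> (U \<omega>) \<partial>M) + (\<integral>\<^sup>+ \<omega>. Theta \<rho> (V \<omega>) \<partial>M))"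
proof -
  have [measurable]: "(\<lambda>r. phi M U r) \<in> borel_measurable \<rho>" "(\<lambda>r. phi M V r) \<in> borel_measurable \<rho>"
    using phi_meas[OF P L] by auto
  have "(d_rho \<rho> (law M U) (law M V))\<^sup>2 = (\<integral>\<^sup>+ r. ennreal ((cmod (phi M U r - phi M V r))\<^sup>2) \<partial>\<rho>)"
    by (simp add: d_rho_sq charf_law)
  also have "\<dots> \<le> (\<integral>\<^sup>+ r. 4 * (ennreal (1 - Re (phi M U r)) + ennreal (1 - Re (phi M V r))) \<partial>\<rho>)"
  proof (rule nn_integral_mono)
    fix r
    have a: "cmod (phi M U r) \<le> 1" by (rule norm_phi[OF P]) simp
    have b: "cmod (phi M V r) \<le> 1" by (rule norm_phi[OF P]) simp
    have "ennreal ((cmod (phi M U r - phi M V r))\<^sup>2) \<le> ennreal (4 * ((1 - Re (phi M U r)) + (1 - Re (phi M V r))))"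
      by (rule ennreal_leI) (rule P_c[OF a b])
    also have "\<dots> = 4 * (ennreal (1 - Re (phi M U r)) + ennreal (1 - Re (phi M V r)))"
      using Re_mod[OF a] Re_mod[OF b]
      by (subst ennreal_mult') (auto simp del: ennreal_plus simp add: ennreal_plus[symmetric])
    finally show "ennreal ((cmod (phi M U r - phi M V r))\<^sup>2) \<le> 4 * (ennreal (1 - Re (phi M U r)) + ennreal (1 - Re (phi M V r)))" .
  qed
  also have "\<dots> = 4 * ((\<integral>\<^sup>+ \<omega>. Theta \<rho> (U \<omega>) \<partial>M) + (\<integral>\<^sup>+ \<omega>. Theta \<rho> (V \<omega>) \<partial>M))"
    by (simp add: nn_integral_cmult nn_integral_add Tonelli_Theta[OF P L])
  finally show ?thesis .
qed

theorem proposition2p4: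
  fixes M :: "'b measure" and \<rho> :: "'a::euclidean_space measure"
    and U V :: "'b \<Rightarrow> 'a"
  assumes "prob_space M"
    and "sym_levy_measure \<rho>" and "full_support \<rho>"
    and U: "U \<in> borel_measurable M" and V: "V \<in> borel_measurable M"
  shows
  \<comment> \<open>(a)\<close>
  "(\<forall>U' V'. U' \<in> borel_measurable M \<and> V' \<in> borel_measurable M \<and>
      distr M (borel \<Otimes>\<^sub>M borel) (\<lambda>\<omega>. (U' \<omega>, V' \<omega>)) = distr M (borel \<Otimes>\<^sub>M borel) (\<lambda>\<omega>. (U \<omega>, V \<omega>)) \<and>
      prob_space.indep_var M (borel \<Otimes>\<^sub>M borel) (\<lambda>\<omega>. (U \<omega>, V \<omega>)) (borel \<Otimes>\<^sub>M borel) (\<lambda>\<omega>. (U' \<omega>, V' \<omega>))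
    \<longrightarrow> (\<integral>\<^sup>+ \<omega>. Theta \<rho> (U \<omega> - U' \<omega>) \<partial>M) + (\<integral>\<^sup>+ \<omega>. Theta \<rho> (V \<omega> - V' \<omega>) \<partial>M)
        \<le> 2 * (\<integral>\<^sup>+ \<omega>. Theta \<rho> (U \<omega> - V' \<omega>) \<partial>M))
  \<and>
  \<comment> \<open>(b)\<close>
  (\<integral>\<^sup>+ \<omega>. Theta \<rho> (U \<omega> - V \<omega>) \<partial>M)
     \<le> 2 * ((\<integral>\<^sup>+ \<omega>. Theta \<rho> (U \<omega>) \<partial>M) + (\<integral>\<^sup>+ \<omega>. Theta \<rho> (V \<omega>) \<partial>M))
  \<and>
  (\<forall>U'. U' \<in> borel_measurable M \<and> distr M borel U' = distr M borel U \<and>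
      prob_space.indep_var M borel U borel U'
    \<longrightarrow> (\<integral>\<^sup>+ \<omega>. Theta \<rho> (U \<omega> - U' \<omega>) \<partial>M) \<le> 4 * (\<integral>\<^sup>+ \<omega>. Theta \<rho> (U \<omega>) \<partial>M))
  \<and>
  \<comment> \<open>(c)\<close>
  (d_rho \<rho> (law M U) (law M V))\<^sup>2
     \<le> 4 * ((\<integral>\<^sup>+ \<omega>. Theta \<rho> (U \<omega>) \<partial>M) + (\<integral>\<^sup>+ \<omega>. Theta \<rho> (V \<omega>) \<partial>M))
  \<and>
  \<comment> \<open>(d)\<close>
  (\<forall>U' V'. U' \<in> borel_measurable M \<and> V' \<in> borel_measurable M \<and>
      distr M (borel \<Otimes>\<^sub>M borel) (\<lambda>\<omega>. (U' \<omega>, V' \<omega>)) = distr M (borel \<Otimes>\<^sub>M borel) (\<lambda>\<omega>. (U \<omega>, V \<omega>)) \<and>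
      prob_space.indep_var M (borel \<Otimes>\<^sub>M borel) (\<lambda>\<omega>. (U \<omega>, V \<omega>)) (borel \<Otimes>\<^sub>M borel) (\<lambda>\<omega>. (U' \<omega>, V' \<omega>)) \<and>
      (\<integral>\<^sup>+ \<omega>. Theta \<rho> (U \<omega>) \<partial>M) + (\<integral>\<^sup>+ \<omega>. Theta \<rho> (V \<omega>) \<partial>M) < \<infinity>
    \<longrightarrow> (d_rho \<rho> (law M U) (law M V))\<^sup>2 < \<infinity>
      \<and> (\<integral>\<^sup>+ \<omega>. Theta \<rho> (U \<omega> - V' \<omega>) \<partial>M) < \<infinity>
      \<and> (\<integral>\<^sup>+ \<omega>. Theta \<rho> (U \<omega> - U' \<omega>) \<partial>M) < \<infinity>
      \<and> (\<integral>\<^sup>+ \<omega>. Theta \<rho> (V \<omega> - V' \<omega>) \<partial>M) < \<infinity>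
      \<and> enn2real ((d_rho \<rho> (law M U) (law M V))\<^sup>2)
          = 2 * enn2real (\<integral>\<^sup>+ \<omega>. Theta \<rho> (U \<omega> - V' \<omega>) \<partial>M)
            - enn2real (\<integral>\<^sup>+ \<omega>. Theta \<rho> (U \<omega> - U' \<omega>) \<partial>M)
            - enn2real (\<integral>\<^sup>+ \<omega>. Theta \<rho> (V \<omega> - V' \<omega>) \<partial>M))"
proof (intro conjI allI impI)
  note P = assms(1) and L = assms(2)
  fix U' V' :: "'b \<Rightarrow> 'a"
  assume H: "U' \<in> borel_measurable M \<and> V' \<in> borel_measurable M \<and>
      distr M (borel \<Otimes>\<^sub>M borel) (\<lambda>\<omega>. (U' \<omega>, V' \<omega>)) = distr M (borel \<Otimes>\<^sub>M borel) (\<lambda>\<omega>. (U \<omega>, V \<omega>)) \<and>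
      prob_space.indep_var M (borel \<Otimes>\<^sub>M borel) (\<lambda>\<omega>. (U \<omega>, V \<omega>)) (borel \<Otimes>\<^sub>M borel) (\<lambda>\<omega>. (U' \<omega>, V' \<omega>))"
  have id: "(d_rho \<rho> (law M U) (law M V))\<^sup>2 + (\<integral>\<^sup>+\<omega>. Theta \<rho> (U \<omega> - U' \<omega>) \<partial>M) + (\<integral>\<^sup>+\<omega>. Theta \<rho> (V \<omega> - V' \<omega>) \<partial>M)
     = 2 * (\<integral>\<^sup>+\<omega>. Theta \<rho> (U \<omega> - V' \<omega>) \<partial>M)"
    using ident[OF P L U V] H by blast
  have "(\<integral>\<^sup>+ \<omega>. Theta \<rho> (U \<omega> - U' \<omega>) \<partial>M) + (\<integral>\<^sup>+ \<omega>. Theta \<rho> (V \<omega> - V' \<omega>) \<partial>M)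
     \<le> (d_rho \<rho> (law M U) (law M V))\<^sup>2 + (\<integral>\<^sup>+\<omega>. Theta \<rho> (U \<omega> - U' \<omega>) \<partial>M) + (\<integral>\<^sup>+\<omega>. Theta \<rho> (V \<omega> - V' \<omega>) \<partial>M)"
    by (simp add: add.assoc add_increasing)
  then show "(\<integral>\<^sup>+ \<omega>. Theta \<rho> (U \<omega> - U' \<omega>) \<partial>M) + (\<integral>\<^sup>+ \<omega>. Theta \<rho> (V \<omega> - V' \<omega>) \<partial>M)
        \<le> 2 * (\<integral>\<^sup>+ \<omega>. Theta \<rho> (U \<omega> - V' \<omega>) \<partial>M)" using id by simp
next
  show "(\<integral>\<^sup>+ \<omega>. Theta \<rho> (U \<omega> - V \<omega>) \<partial>M)
     \<le> 2 * ((\<integral>\<^sup>+ \<omega>. Theta \<rho> (U \<omega>) \<partial>M) + (\<integral>\<^sup>+ \<omega>. Theta \<rho> (V \<omega>) \<partial>M))"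
    by (rule Theta_diff_int[OF assms(2) U V])
next
  fix U' :: "'b \<Rightarrow> 'a"
  assume H: "U' \<in> borel_measurable M \<and> distr M borel U' = distr M borel U \<and>
      prob_space.indep_var M borel U borel U'"
  have eq: "(\<integral>\<^sup>+ \<omega>. Theta \<rho> (U' \<omega>) \<partial>M) = (\<integral>\<^sup>+ \<omega>. Theta \<rho> (U \<omega>) \<partial>M)"
  proof -
    have "phi M U' r = phi M U r" for r using H U by (intro phi_law) auto
    then show ?thesis using H U by (simp add: Tonelli_Theta[OF assms(1,2)])
  qed
  have "(\<integral>\<^sup>+ \<omega>. Theta \<rho> (U \<omega> - U' \<omega>) \<partial>M) \<le> 2 * ((\<integral>\<^sup>+ \<omega>. Theta \<rho> (U \<omega>) \<partial>M) + (\<integral>\<^sup>+ \<omega>. Theta \<rho> (U' \<omega>) \<partial>M))"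
    using H by (intro Theta_diff_int[OF assms(2) U]) auto
  also have "\<dots> = 4 * (\<integral>\<^sup>+ \<omega>. Theta \<rho> (U \<omega>) \<partial>M)"
  proof -
    have "(2::ennreal) * (x + x) = 4 * x" for x :: ennreal
      by (metis mult_2 mult.assoc numeral_Bit0 one_add_one) 
    then show ?thesis unfolding eq by simp
  qed
  finally show "(\<integral>\<^sup>+ \<omega>. Theta \<rho> (U \<omega> - U' \<omega>) \<partial>M) \<le> 4 * (\<integral>\<^sup>+ \<omega>. Theta \<rho> (U \<omega>) \<partial>M)" .
next
  show "(d_rho \<rho> (law M U) (law M V))\<^sup>2
     \<le> 4 * ((\<integral>\<^sup>+ \<omega>. Theta \<rho> (U \<omega>) \<partial>M) + (\<integral>\<^sup>+ \<omega>. Theta \<rho> (V \<omega>) \<partial>M))"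
    by (rule part_c[OF assms(1,2) U V])
next
  note P = assms(1) and L = assms(2)
  fix U' V' :: "'b \<Rightarrow> 'a"
  assume H: "U' \<in> borel_measurable M \<and> V' \<in> borel_measurable M \<and>
      distr M (borel \<Otimes>\<^sub>M borel) (\<lambda>\<omega>. (U' \<omega>, V' \<omega>)) = distr M (borel \<Otimes>\<^sub>M borel) (\<lambda>\<omega>. (U \<omega>, V \<omega>)) \<and>
      prob_space.indep_var M (borel \<Otimes>\<^sub>M borel) (\<lambda>\<omega>. (U \<omega>, V \<omega>)) (borel \<Otimes>\<^sub>M borel) (\<lambda>\<omega>. (U' \<omega>, V' \<omega>)) \<and>
      (\<integral>\<^sup>+ \<omega>. Theta \<rho> (U \<omega>) \<partial>M) + (\<integral>\<^sup>+ \<omega>. Theta \<rho> (V \<omega>) \<partial>M) < \<infinity>"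
  have V': "V' \<in> borel_measurable M" using H by blast
  note pf = pair_facts[OF P U V, of U' V'] 
  have lawV: "distr M borel V' = distr M borel V" using pf H by blast
  have eq: "(\<integral>\<^sup>+ \<omega>. Theta \<rho> (V' \<omega>) \<partial>M) = (\<integral>\<^sup>+ \<omega>. Theta \<rho> (V \<omega>) \<partial>M)"
  proof -
    have "phi M V' r = phi M V r" for r using lawV V V' by (intro phi_law) auto
    then show ?thesis using V V' by (simp add: Tonelli_Theta[OF assms(1,2)])
  qed
  have id: "(d_rho \<rho> (law M U) (law M V))\<^sup>2 + (\<integral>\<^sup>+\<omega>. Theta \<rho> (U \<omega> - U' \<omega>) \<partial>M) + (\<integral>\<^sup>+\<omega>. Theta \<rho> (V \<omega> - V' \<omega>) \<partial>M)
     = 2 * (\<integral>\<^sup>+\<omega>. Theta \<rho> (U \<omega> - V' \<omega>) \<partial>M)"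
    using ident[OF P L U V] H by blast
  have "(\<integral>\<^sup>+\<omega>. Theta \<rho> (U \<omega> - V' \<omega>) \<partial>M) \<le> 2 * ((\<integral>\<^sup>+ \<omega>. Theta \<rho> (U \<omega>) \<partial>M) + (\<integral>\<^sup>+ \<omega>. Theta \<rho> (V' \<omega>) \<partial>M))"
    by (rule Theta_diff_int[OF L U V'])
  also have "\<dots> < \<infinity>" using H eq by (simp add: ennreal_mult_less_top)
  finally have C: "(\<integral>\<^sup>+\<omega>. Theta \<rho> (U \<omega> - V' \<omega>) \<partial>M) < \<infinity>" .
  then have S: "(d_rho \<rho> (law M U) (law M V))\<^sup>2 + (\<integral>\<^sup>+\<omega>. Theta \<rho> (U \<omega> - U' \<omega>) \<partial>M) + (\<integral>\<^sup>+\<omega>. Theta \<rho> (V \<omega> - V' \<omega>) \<partial>M) < \<infinity>"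
    unfolding id by (simp add: ennreal_mult_less_top)
  then show "(d_rho \<rho> (law M U) (law M V))\<^sup>2 < \<infinity>"
    and "(\<integral>\<^sup>+\<omega>. Theta \<rho> (U \<omega> - U' \<omega>) \<partial>M) < \<infinity>"
    and "(\<integral>\<^sup>+\<omega>. Theta \<rho> (V \<omega> - V' \<omega>) \<partial>M) < \<infinity>"
    by auto
  show "(\<integral>\<^sup>+\<omega>. Theta \<rho> (U \<omega> - V' \<omega>) \<partial>M) < \<infinity>" by (fact C)
  have "enn2real ((d_rho \<rho> (law M U) (law M V))\<^sup>2 + (\<integral>\<^sup>+\<omega>. Theta \<rho> (U \<omega> - U' \<omega>) \<partial>M) + (\<integral>\<^sup>+\<omega>. Theta \<rho> (V \<omega> - V' \<omega>) \<partial>M))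
     = enn2real ((d_rho \<rho> (law M U) (law M V))\<^sup>2) + enn2real (\<integral>\<^sup>+\<omega>. Theta \<rho> (U \<omega> - U' \<omega>) \<partial>M) + enn2real (\<integral>\<^sup>+\<omega>. Theta \<rho> (V \<omega> - V' \<omega>) \<partial>M)"
    using S by (simp add: enn2real_plus)
  moreover have "enn2real (2 * (\<integral>\<^sup>+\<omega>. Theta \<rho> (U \<omega> - V' \<omega>) \<partial>M)) = 2 * enn2real (\<integral>\<^sup>+\<omega>. Theta \<rho> (U \<omega> - V' \<omega>) \<partial>M)"
    by (simp add: enn2real_mult)
  ultimately show "enn2real ((d_rho \<rho> (law M U) (law M V))\<^sup>2)
          = 2 * enn2real (\<integral>\<^sup>+ \<omega>. Theta \<rho> (U \<omega> - V' \<omega>) \<partial>M)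
            - enn2real (\<integral>\<^sup>+ \<omega>. Theta \<rho> (U \<omega> - U' \<omega>) \<partial>M)
            - enn2real (\<integral>\<^sup>+ \<omega>. Theta \<rho> (V \<omega> - V' \<omega>) \<partial>M)"
    using id by simp
qed

end
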